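(* Let $d\ge 0$, $n\ge 1$ and $p$ prime. If $c,c'\in C(d,n,p)$, then both $\operatorname{lcm}(c,c')=(\max(c_1,c_1'),\dots,\max(c_M,c_M'))$ and $\gcd(c,c')=(\min(c_1,c_1'),\dots,\min(c_M,c_M'))$ belong to $C(d,n,p)$. Consequently $C(d,n,p)$, with the componentwise partial order ($c\le c'$ iff $c_i\le c_i'$ for all $i$), is a finite lattice, and in particular it has a unique maximal element.
   Context: Let $p$ be a prime. Every integer $a\ge0$ has base-$p$ expansion $a=\sum_{j\ge0}a_jp^j$ with digits $0\le a_j\le p-1$. For $d\ge1$ let $M=\max\{j: d_j\ne0\}$. Let $S=\mathbf{k}[x_1,\dots,x_n]$ with $\mathbf k$ algebraically closed of characteristic $p$. For a monomial $x^{\underline b}=x_1^{b_1}\cdots x_n^{b_n}$ of degree $d=b_1+\cdots+b_n$, write $b_{i,j}$ for the $j$-th base-$p$ digit of $b_i$. Its carry pattern is $c(\underline b)=(c_1,\dots,c_M)$, the integers determined by $\sum_{i=1}^n\sum_{0\le j<\ell} b_{i,j}p^j = c_\ell p^\ell+\sum_{0\le j<\ell} d_jp^j$ for $1\le \ell\le M$ (with the convention $c_i=0$ for $i<1$ and $i>M$); i.e. $c_\ell$ is the amount carried into the $p^\ell$ column when adding $b_1,\dots,b_n$ in base $p$. $C(d,n,p)$ denotes the set of all carry patterns of degree-$d$ monomials in $n$ variables (for $d=0$ it consists of the empty sequence). *)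

theory Defs
  imports Main "HOL-Computational_Algebra.Primes"
begin

definition digit :: "nat \<Rightarrow> nat \<Rightarrow> nat \<Rightarrow> nat" where
  "digit p a j = (a div p ^ j) mod p"

text \<open>M = max{j. d_j \<noteq> 0} for d \<ge> 1; for d = 0 we set M = 0, so the carry pattern is the empty sequence.\<close>
definition topdigit :: "nat \<Rightarrow> nat \<Rightarrow> nat" where
  "topdigit p d = (if d = 0 then 0 else Max {j. digit p d j \<noteq> 0})"

text \<open>Exponent vector of a monomial in n variables: a list b of length n; its degree is sum_list b.
  The carry c_l is the integer with
  sum_i sum_{j<l} b_{i,j} p^j = c_l p^l + sum_{j<l} d_j p^j.\<close>
definition carry :: "nat \<Rightarrow> nat \<Rightarrow> nat list \<Rightarrow> nat \<Rightarrow> int" where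
  "carry p d b l =
     ((\<Sum>i<length b. \<Sum>j<l. int (digit p (b ! i) j) * int p ^ j)
       - (\<Sum>j<l. int (digit p d j) * int p ^ j)) div (int p ^ l)"

definition carry_pattern :: "nat \<Rightarrow> nat \<Rightarrow> nat list \<Rightarrow> int list" where
  "carry_pattern p d b = map (carry p d b) [1..<topdigit p d + 1]"

definition carry_set :: "nat \<Rightarrow> nat \<Rightarrow> nat \<Rightarrow> int list set" where
  "carry_set d n p = {carry_pattern p d b | b. length b = n \<and> sum_list b = d}"

definition cle :: "int list \<Rightarrow> int list \<Rightarrow> bool" where
  "cle c c' = (length c = length c' \<and> (\<forall>i<length c. c ! i \<le> c' ! i))"

definition clcm :: "int list \<Rightarrow> int list \<Rightarrow> int list" where
  "clcm c c' = map2 max c c'"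

definition cgcd :: "int list \<Rightarrow> int list \<Rightarrow> int list" where
  "cgcd c c' = map2 min c c'"

end

theory Submission imports Defs begin

lemma sum_list_nth: "sum_list (map f xs) = (\<Sum>i<length xs. f (xs!i))"
  by (induction xs) (simp_all del: sum.lessThan_Suc add: sum.lessThan_Suc_shift)

lemma digit_sum:
  assumes "p > 0"
  shows "(\<Sum>j<l. digit p a j * p^j) = a mod p^l"
proof (induction l)
  case 0 then show ?case by simp
next
  case (Suc l)
  have "a mod p^Suc l = a mod (p^l * p)" by (simp add: mult.commute)
  also have "\<dots> = p^l * (a div p^l mod p) + a mod p^l" by (rule mod_mult2_eq)
  finally show ?case using Suc by (simp add: digit_def mult.commute)
qed

lemma digit_num:
  assumes "p > 0" "\<forall>j. t j < p"
  shows "digit p (\<Sum>j<K. t j * p^j) i = (if i < K then t i else 0)"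
  using assms(2)
proof (induction i arbitrary: t K)
  case 0
  then show ?case
  proof (cases K)
    case 0 then show ?thesis by (simp add: digit_def)
  next
    case (Suc K')
    have "(\<Sum>j<K. t j * p^j) = t 0 + p * (\<Sum>j<K'. t (Suc j) * p^j)"
      unfolding Suc sum.lessThan_Suc_shift by (simp add: sum_distrib_left mult.assoc mult.left_commute)
    then show ?thesis using Suc 0 by (simp add: digit_def)
  qed
next
  case (Suc i)
  then show ?case
  proof (cases K)
    case 0 then show ?thesis by (simp add: digit_def)
  next
    case (Suc K')
    have e: "(\<Sum>j<K. t j * p^j) = t 0 + p * (\<Sum>j<K'. t (Suc j) * p^j)"
      unfolding Suc sum.lessThan_Suc_shift by (simp add: sum_distrib_left mult.assoc mult.left_commute)
    have "(t 0 + p * (\<Sum>j<K'. t (Suc j) * p^j)) div p = (\<Sum>j<K'. t (Suc j) * p^j)"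
      using assms(1) Suc.prems by simp
    then have "digit p (\<Sum>j<K. t j * p^j) (Suc i) = digit p (\<Sum>j<K'. t (Suc j) * p^j) i"
      unfolding e digit_def by (simp add: div_mult2_eq)
    also have "\<dots> = (if i < K' then t (Suc i) else 0)"
      using Suc.IH[of "\<lambda>j. t (Suc j)" K'] Suc.prems by simp
    finally show ?thesis using Suc by simp
  qed
qed

lemma distribute:
  assumes "p > 0" "\<forall>j. s j \<le> n * (p - 1)"
  shows "\<exists>ts. length ts = n \<and> (\<forall>t\<in>set ts. \<forall>j. t j < p)
              \<and> (\<forall>j. (\<Sum>i<n. (ts!i) j) = s j)"
  using assms(2)
proof (induction n arbitrary: s)
  case 0 then show ?case by simp
next
  case (Suc n)
  define h where "h j = min (p - 1) (s j)" for j
  define r where "r j = s j - h j" for j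
  have "\<forall>j. r j \<le> n * (p - 1)"
  proof
    fix j
    have "s j \<le> (p - 1) + n * (p - 1)" using Suc.prems by simp
    then show "r j \<le> n * (p - 1)" by (simp add: r_def h_def)
  qed
  then obtain ts where ts: "length ts = n" "\<forall>t\<in>set ts. \<forall>j. t j < p"
     "\<forall>j. (\<Sum>i<n. (ts!i) j) = r j" using Suc.IH by blast
  have "length (h # ts) = Suc n" using ts by simp
  moreover have "\<forall>t\<in>set (h#ts). \<forall>j. t j < p" using ts assms(1) by (auto simp: h_def)
  moreover have "\<forall>j. (\<Sum>i<Suc n. ((h#ts)!i) j) = s j"
    using ts(3) by (auto simp del: sum.lessThan_Suc simp add: sum.lessThan_Suc_shift r_def h_def)
  ultimately show ?case by blast
qed

lemma telescope:
  fixes e :: "nat \<Rightarrow> int" and q :: int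
  shows "(\<Sum>j<l. (q * e (Suc j) - e j) * q^j) = e l * q^l - e 0"
  by (induction l) (auto simp: algebra_simps)

lemma digit_zero_big:
  assumes "p \<ge> 2" "j > topdigit p d"
  shows "digit p d j = 0"
proof (cases "d = 0")
  case True then show ?thesis by (simp add: digit_def)
next
  case False
  have sub: "{j. digit p d j \<noteq> 0} \<subseteq> {..d}"
  proof
    fix j assume j: "j \<in> {j. digit p d j \<noteq> 0}"
    show "j \<in> {..d}"
    proof (rule ccontr)
      assume "j \<notin> {..d}"
      then have "d < j" by simp
      also have "j < 2^j" by (rule less_exp)
      also have "2^j \<le> p^j" using assms(1) by (rule power_mono) simp
      finally have "d div p^j = 0" by simp
      then show False using j by (simp add: digit_def)
    qed
  qed
  then have fin: "finite {j. digit p d j \<noteq> 0}" using finite_subset by blast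
  show ?thesis
  proof (rule ccontr)
    assume "digit p d j \<noteq> 0"
    then have "j \<le> Max {j. digit p d j \<noteq> 0}" using fin by simp
    then show False using assms(2) False by (simp add: topdigit_def)
  qed
qed

lemma d_less:
  assumes "p \<ge> 2"
  shows "d < p ^ Suc (topdigit p d)"
proof -
  define M where "M = topdigit p d"
  define K where "K = Suc (max d M)"
  have "d < 2^d" by (rule less_exp)
  also have "2^d \<le> p^d" using assms by (intro power_mono) simp_all
  also have "p^d \<le> p^K" using assms by (intro power_increasing) (simp_all add: K_def)
  finally have "d = d mod p^K" by simp
  also have "\<dots> = (\<Sum>j<K. digit p d j * p^j)" using assms by (simp add: digit_sum)
  also have "\<dots> = (\<Sum>j<Suc M. digit p d j * p^j)"
    by (rule sum.mono_neutral_right) (auto simp: K_def M_def digit_zero_big[OF assms])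
  also have "\<dots> = d mod p ^ Suc M" by (rule digit_sum) (use assms in simp)
  finally have "d = d mod p ^ Suc M" .
  moreover have "d mod p ^ Suc M < p ^ Suc M" using assms by simp
  ultimately show ?thesis unfolding M_def by linarith
qed

definition ext :: "int list \<Rightarrow> nat \<Rightarrow> int" where
  "ext c l = (if 1 \<le> l \<and> l \<le> length c then c!(l-1) else 0)"

definition good :: "nat \<Rightarrow> nat \<Rightarrow> nat \<Rightarrow> int list \<Rightarrow> bool" where
  "good d n p c \<longleftrightarrow> length c = topdigit p d \<and>
     (\<forall>j\<le>topdigit p d. 0 \<le> int (digit p d j) + int p * ext c (Suc j) - ext c j
        \<and> int (digit p d j) + int p * ext c (Suc j) - ext c j \<le> int n * (int p - 1))"

lemma digit_lt: "p > 0 \<Longrightarrow> digit p a j \<le> p - 1"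
  unfolding digit_def using mod_less_divisor[of p "a div p^j"] by linarith

lemma fwd:
  assumes p2: "p \<ge> 2" and len: "length b = n" and sm: "sum_list b = d"
  shows "good d n p (carry_pattern p d b)"
proof -
  have p0: "p > 0" using p2 by simp
  define M where "M = topdigit p d"
  define A where "A l = (\<Sum>i<length b. \<Sum>j<l. int (digit p (b!i) j) * int p^j)" for l
  define B where "B l = (\<Sum>j<l. int (digit p d j) * int p^j)" for l
  define s where "s j = (\<Sum>i<length b. digit p (b!i) j)" for j
  define C where "C l = (A l - B l) div int p^l" for l
  have sumb: "(\<Sum>i<length b. b!i) = d" using sm sum_list_nth[of "\<lambda>x. x" b] by simp
  have A_eq: "A l = int (\<Sum>i<length b. (b!i) mod p^l)" for l
    unfolding A_def by (simp add: digit_sum[OF p0, symmetric] of_nat_sum)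
  have B_eq: "B l = int (d mod p^l)" for l
    unfolding B_def by (simp add: digit_sum[OF p0, symmetric] of_nat_sum)
  have dv: "int p^l dvd (A l - B l)" for l
  proof -
    have "(\<Sum>i<length b. (b!i) mod p^l) mod p^l = (d mod p^l) mod p^l"
      using mod_sum_eq[of "\<lambda>i. b!i" "p^l" "{..<length b}"] sumb by simp
    then have "int (\<Sum>i<length b. (b!i) mod p^l) mod int (p^l) = int (d mod p^l) mod int (p^l)"
      by (metis of_nat_mod)
    then show ?thesis unfolding A_eq B_eq by (simp add: mod_eq_dvd_iff)
  qed
  have AC: "A l - B l = int p^l * C l" for l
    unfolding C_def using dv[of l] by simp
  have A_Suc: "A (Suc l) = A l + int (s l) * int p^l" for l
    by (simp add: A_def s_def sum.distrib sum_distrib_right of_nat_sum)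
  have B_Suc: "B (Suc l) = B l + int (digit p d l) * int p^l" for l
    by (simp add: B_def)
  have key: "int (s l) = int (digit p d l) + int p * C (Suc l) - C l" for l
  proof -
    have "int p^(Suc l) * C (Suc l) = int p^l * C l + (int (s l) - int (digit p d l)) * int p^l"
      using AC[of "Suc l"] AC[of l] A_Suc[of l] B_Suc[of l] by (simp add: algebra_simps)
    then have "int p^l * (int (s l) - (int (digit p d l) + int p * C (Suc l) - C l)) = 0"
      by (simp add: algebra_simps)
    then show ?thesis using p0 by simp
  qed
  have C0: "C 0 = 0" by (simp add: C_def A_def B_def)
  have CM: "C (Suc M) = 0"
  proof -
    have "d < p^Suc M" unfolding M_def by (rule d_less[OF p2])
    moreover have "b!i \<le> d" if "i < length b" for i
      using member_le_sum_list[of "b!i" b] that sm by simp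
    ultimately have "(b!i) mod p^Suc M = b!i" if "i < length b" for i
      using that by (meson le_less_trans mod_less)
    then have "A (Suc M) = int d" unfolding A_eq using sumb by simp
    moreover have "B (Suc M) = int d" unfolding B_eq using \<open>d < p^Suc M\<close> by simp
    ultimately show ?thesis by (simp add: C_def)
  qed
  have sb: "s l \<le> n * (p - 1)" for l
  proof -
    have "s l \<le> card {..<length b} * (p - 1)"
      unfolding s_def using sum_bounded_above[of "{..<length b}" "\<lambda>i. digit p (b!i) l" "p-1"] digit_lt[OF p0] by simp
    then show ?thesis using len by simp
  qed
  have extC: "ext (carry_pattern p d b) l = C l" if lM: "l \<le> Suc M" for l
  proof -
    consider "l = 0" | "l = Suc M" | "1 \<le> l" "l \<le> M" using lM by linarith
    then show ?thesis
    proof cases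
      case 1 then show ?thesis by (simp add: ext_def C0)
    next
      case 2 then show ?thesis using CM by (simp add: ext_def carry_pattern_def M_def)
    next
      case 3
      then have "carry_pattern p d b ! (l - 1) = carry p d b l"
        by (simp del: upt_Suc add: carry_pattern_def M_def nth_map)
      also have "\<dots> = C l" by (simp add: carry_def C_def A_def B_def)
      finally show ?thesis using 3 by (simp add: ext_def carry_pattern_def M_def)
    qed
  qed
  have nn: "int n * (int p - 1) = int (n * (p - 1))" using p0 by (simp add: of_nat_diff)
  have "length (carry_pattern p d b) = M" by (simp add: carry_pattern_def M_def)
  moreover have "0 \<le> int (digit p d j) + int p * ext (carry_pattern p d b) (Suc j) - ext (carry_pattern p d b) j
        \<and> int (digit p d j) + int p * ext (carry_pattern p d b) (Suc j) - ext (carry_pattern p d b) j \<le> int n * (int p - 1)"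
    if "j \<le> M" for j
  proof -
    have "ext (carry_pattern p d b) (Suc j) = C (Suc j)" "ext (carry_pattern p d b) j = C j"
      using that by (simp_all add: extC)
    moreover have "int (s j) \<le> int n * (int p - 1)" unfolding nn using sb[of j] by (simp only: of_nat_le_iff)
    ultimately show ?thesis using key[of j] by simp
  qed
  ultimately show ?thesis unfolding good_def M_def by blast
qed

lemma bwd:
  assumes p2: "p \<ge> 2" and g: "good d n p c"
  shows "c \<in> carry_set d n p"
proof -
  have p0: "p > 0" using p2 by simp
  define M where "M = topdigit p d"
  define e where "e = ext c"
  define D where "D j = int (digit p d j)" for j
  have lenc: "length c = M" using g by (simp add: good_def M_def)
  have gj: "0 \<le> D j + int p * e (Suc j) - e j \<and> D j + int p * e (Suc j) - e j \<le> int n * (int p - 1)"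
    if "j \<le> M" for j using g that by (simp add: good_def M_def e_def D_def)
  define s where "s j = (if j \<le> M then nat (D j + int p * e (Suc j) - e j) else 0)" for j
  have nn: "int n * (int p - 1) = int (n * (p - 1))" using p0 by (simp add: of_nat_diff)
  have s_int: "int (s j) = D j + int p * e (Suc j) - e j" if "j \<le> M" for j
    using gj[OF that] that by (simp add: s_def)
  have sb: "\<forall>j. s j \<le> n * (p - 1)"
  proof
    fix j show "s j \<le> n * (p - 1)"
    proof (cases "j \<le> M")
      case True
      then have "int (s j) \<le> int (n * (p - 1))" using gj[OF True] s_int[OF True] nn by simp
      then show ?thesis by (simp only: of_nat_le_iff)
    qed (simp add: s_def)
  qed
  obtain ts where ts: "length ts = n" "\<forall>t\<in>set ts. \<forall>j. t j < p"
      "\<forall>j. (\<Sum>i<n. (ts!i) j) = s j"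
    using distribute[OF p0 sb] by blast
  define b where "b = map (\<lambda>t. \<Sum>j<Suc M. t j * p^j) ts"
  have lenb: "length b = n" by (simp add: b_def ts)
  have dig: "digit p (b!i) j = (if j < Suc M then (ts!i) j else 0)" if "i < n" for i j
  proof -
    have "ts!i \<in> set ts" using that ts(1) by simp
    then have "\<forall>j. (ts!i) j < p" using ts(2) by blast
    then show ?thesis using that ts(1) digit_num[OF p0, of "ts!i" "Suc M" j]
      by (simp del: sum.lessThan_Suc add: b_def)
  qed
  have e0: "e 0 = 0" by (simp add: e_def ext_def)
  have eM: "e (Suc M) = 0" by (simp add: e_def ext_def lenc)
  have Dsum: "(\<Sum>j<l. D j * int p^j) = int (d mod p^l)" for l
    unfolding D_def by (simp add: digit_sum[OF p0, symmetric] of_nat_sum)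
  have colsum: "(\<Sum>i<n. \<Sum>j<l. int (digit p (b!i) j) * int p^j) = (\<Sum>j<l. int (s j) * int p^j)"
    if "l \<le> Suc M" for l
  proof -
    have "(\<Sum>i<n. \<Sum>j<l. int (digit p (b!i) j) * int p^j) = (\<Sum>i<n. \<Sum>j<l. int ((ts!i) j) * int p^j)"
      using that by (intro sum.cong refl) (simp add: dig)
    also have "\<dots> = (\<Sum>j<l. \<Sum>i<n. int ((ts!i) j) * int p^j)" by (rule sum.swap)
    also have "\<dots> = (\<Sum>j<l. int (s j) * int p^j)"
      by (intro sum.cong refl) (simp add: sum_distrib_right[symmetric] ts(3) flip: of_nat_sum)
    finally show ?thesis .
  qed
  have tele: "(\<Sum>j<l. (int (s j) - D j) * int p^j) = e l * int p^l" if "l \<le> Suc M" for l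
  proof -
    have "(\<Sum>j<l. (int (s j) - D j) * int p^j) = (\<Sum>j<l. (int p * e (Suc j) - e j) * int p^j)"
      using that by (intro sum.cong refl) (simp add: s_int)
    also have "\<dots> = e l * int p^l" using telescope[of "int p" e l] e0 by simp
    finally show ?thesis .
  qed
  have "int (sum_list b) = (\<Sum>i<n. int (b!i))"
    using sum_list_nth[of "\<lambda>x. x" b] lenb by (simp add: of_nat_sum)
  also have "\<dots> = (\<Sum>i<n. \<Sum>j<Suc M. int (digit p (b!i) j) * int p^j)"
  proof (intro sum.cong refl)
    fix i assume "i \<in> {..<n}"
    have "b!i = b!i mod p^Suc M"
    proof -
      have "ts!i \<in> set ts" using \<open>i \<in> {..<n}\<close> ts(1) by simp
      then have lt: "\<forall>j. (ts!i) j < p" using ts(2) by blast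
      have "(\<Sum>j<Suc M. (ts!i) j * p^j) < p^Suc M"
      proof (induction M)
        case 0 then show ?case using lt by simp
      next
        case (Suc m)
        have "(ts!i) (Suc m) \<le> p - 1" using lt[rule_format, of "Suc m"] by linarith
        then have "(ts!i) (Suc m) * p^Suc m \<le> (p - 1) * p^Suc m" by (rule mult_right_mono) simp
        moreover have "(p - 1) * p^Suc m + p^Suc m = p^Suc (Suc m)" using p0
          by (cases p) (simp_all add: algebra_simps)
        ultimately show ?case using Suc.IH by (simp only: sum.lessThan_Suc[of _ "Suc m"])
      qed
      then show ?thesis using \<open>i \<in> {..<n}\<close> ts(1) by (simp add: b_def)
    qed
    then show "int (b!i) = (\<Sum>j<Suc M. int (digit p (b!i) j) * int p^j)"
    proof -
      have "b!i = (\<Sum>j<Suc M. digit p (b!i) j * p^j)"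
        using digit_sum[OF p0, of "b!i" "Suc M"] \<open>b!i = b!i mod p^Suc M\<close> by (simp del: sum.lessThan_Suc)
      then have "int (b!i) = int (\<Sum>j<Suc M. digit p (b!i) j * p^j)" by (rule arg_cong)
      then show ?thesis by (simp only: of_nat_sum of_nat_mult of_nat_power)
    qed
  qed
  also have "\<dots> = (\<Sum>j<Suc M. int (s j) * int p^j)" by (rule colsum) simp
  also have "\<dots> = (\<Sum>j<Suc M. D j * int p^j) + (\<Sum>j<Suc M. (int (s j) - D j) * int p^j)"
    by (simp add: sum.distrib[symmetric] algebra_simps)
  also have "\<dots> = int d"
    using tele[of "Suc M"] eM Dsum[of "Suc M"] d_less[OF p2, of d] by (simp add: M_def)
  finally have sumd: "sum_list b = d" by simp
  have cp: "carry_pattern p d b = c"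
  proof (rule nth_equalityI)
    show "length (carry_pattern p d b) = length c" by (simp add: carry_pattern_def lenc M_def)
    fix i assume "i < length (carry_pattern p d b)"
    then have i: "i < M" by (simp del: upt_Suc add: carry_pattern_def M_def)
    have "carry_pattern p d b ! i = carry p d b (Suc i)"
      using i by (simp del: upt_Suc add: carry_pattern_def M_def nth_map)
    also have "\<dots> = ((\<Sum>j<Suc i. int (s j) * int p^j) - (\<Sum>j<Suc i. D j * int p^j)) div int p^Suc i"
      unfolding carry_def lenb using colsum[of "Suc i"] i by (simp add: D_def)
    also have "\<dots> = e (Suc i)"
    proof -
      have "(\<Sum>j<Suc i. int (s j) * int p^j) - (\<Sum>j<Suc i. D j * int p^j)
            = (\<Sum>j<Suc i. (int (s j) - D j) * int p^j)"
        by (simp only: sum_subtractf[symmetric] left_diff_distrib)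
      also have "\<dots> = e (Suc i) * int p^Suc i" using tele[of "Suc i"] i by simp
      finally show ?thesis using p0 by simp
    qed
    also have "\<dots> = c ! i" using i lenc by (simp add: e_def ext_def)
    finally show "carry_pattern p d b ! i = c ! i" .
  qed
  show ?thesis unfolding carry_set_def using cp sumd lenb by blast
qed

lemma carry_set_good:
  assumes "p \<ge> 2"
  shows "carry_set d n p = {c. good d n p c}"
  using fwd[OF assms] bwd[OF assms] unfolding carry_set_def by blast

lemma ext_map2':
  assumes "length c = length c'" "f 0 0 = 0"
  shows "ext (map2 f c c') l = f (ext c l) (ext c' l)"
  using assms by (auto simp: ext_def)

lemma good_max:
  assumes g: "good d n p c" "good d n p c'"
  shows "good d n p (clcm c c')"
proof -
  have len: "length c = length c'" using g by (simp add: good_def)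
  have e: "ext (clcm c c') l = max (ext c l) (ext c' l)" for l
    unfolding clcm_def by (rule ext_map2'[OF len]) simp
  show ?thesis unfolding good_def
  proof (intro conjI allI impI)
    show "length (clcm c c') = topdigit p d" using g len by (simp add: good_def clcm_def)
  next
    fix j assume j: "j \<le> topdigit p d"
    let ?a = "ext c (Suc j)" and ?a' = "ext c' (Suc j)" and ?x = "ext c j" and ?x' = "ext c' j"
    have h1: "0 \<le> int (digit p d j) + int p * ?a - ?x" "int (digit p d j) + int p * ?a - ?x \<le> int n * (int p - 1)"
      using g(1) j by (auto simp: good_def)
    have h2: "0 \<le> int (digit p d j) + int p * ?a' - ?x'" "int (digit p d j) + int p * ?a' - ?x' \<le> int n * (int p - 1)"
      using g(2) j by (auto simp: good_def)
    have m1: "int p * ?a \<le> int p * max ?a ?a'" "int p * ?a' \<le> int p * max ?a ?a'"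
      by (simp_all add: mult_left_mono)
    have m2: "int p * max ?a ?a' = int p * ?a \<or> int p * max ?a ?a' = int p * ?a'" by (simp add: max_def)
    show "0 \<le> int (digit p d j) + int p * ext (clcm c c') (Suc j) - ext (clcm c c') j"
      unfolding e using h1 h2 m1 m2 by linarith
    show "int (digit p d j) + int p * ext (clcm c c') (Suc j) - ext (clcm c c') j \<le> int n * (int p - 1)"
      unfolding e using h1 h2 m1 m2 by linarith
  qed
qed

lemma good_min:
  assumes g: "good d n p c" "good d n p c'"
  shows "good d n p (cgcd c c')"
proof -
  have len: "length c = length c'" using g by (simp add: good_def)
  have e: "ext (cgcd c c') l = min (ext c l) (ext c' l)" for l
    unfolding cgcd_def by (rule ext_map2'[OF len]) simp
  show ?thesis unfolding good_def
  proof (intro conjI allI impI)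
    show "length (cgcd c c') = topdigit p d" using g len by (simp add: good_def cgcd_def)
  next
    fix j assume j: "j \<le> topdigit p d"
    let ?a = "ext c (Suc j)" and ?a' = "ext c' (Suc j)" and ?x = "ext c j" and ?x' = "ext c' j"
    have h1: "0 \<le> int (digit p d j) + int p * ?a - ?x" "int (digit p d j) + int p * ?a - ?x \<le> int n * (int p - 1)"
      using g(1) j by (auto simp: good_def)
    have h2: "0 \<le> int (digit p d j) + int p * ?a' - ?x'" "int (digit p d j) + int p * ?a' - ?x' \<le> int n * (int p - 1)"
      using g(2) j by (auto simp: good_def)
    have m1: "int p * min ?a ?a' \<le> int p * ?a" "int p * min ?a ?a' \<le> int p * ?a'"
      by (simp_all add: mult_left_mono)
    have m2: "int p * min ?a ?a' = int p * ?a \<or> int p * min ?a ?a' = int p * ?a'" by (simp add: min_def)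
    show "0 \<le> int (digit p d j) + int p * ext (cgcd c c') (Suc j) - ext (cgcd c c') j"
      unfolding e using h1 h2 m1 m2 by linarith
    show "int (digit p d j) + int p * ext (cgcd c c') (Suc j) - ext (cgcd c c') j \<le> int n * (int p - 1)"
      unfolding e using h1 h2 m1 m2 by linarith
  qed
qed

lemma cle_Cons: "cle (x#xs) (y#ys) \<longleftrightarrow> x \<le> y \<and> cle xs ys"
  unfolding cle_def
  apply (auto simp: nth_Cons split: nat.splits)
  done

lemma cle_sum: "cle m c \<Longrightarrow> sum_list m \<le> sum_list c \<and> (sum_list m = sum_list c \<longrightarrow> m = c)"
proof (induction m arbitrary: c)
  case Nil then show ?case by (simp add: cle_def)
next
  case (Cons x xs)
  then obtain y ys where c: "c = y # ys" by (cases c) (auto simp: cle_def)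
  then have "x \<le> y" "cle xs ys" using Cons.prems by (simp_all add: cle_Cons)
  then show ?case using Cons.IH[of ys] c by auto
qed

theorem mainTheorem1:
  fixes d n p :: nat
  assumes "n \<ge> 1" and "prime p"
  shows "(\<forall>c\<in>carry_set d n p. \<forall>c'\<in>carry_set d n p.
            clcm c c' \<in> carry_set d n p \<and> cgcd c c' \<in> carry_set d n p)
       \<and> finite (carry_set d n p) \<and> carry_set d n p \<noteq> {}
       \<and> (\<forall>c\<in>carry_set d n p. \<forall>c'\<in>carry_set d n p.
            cle c (clcm c c') \<and> cle c' (clcm c c')
            \<and> (\<forall>u\<in>carry_set d n p. cle c u \<and> cle c' u \<longrightarrow> cle (clcm c c') u)
            \<and> cle (cgcd c c') c \<and> cle (cgcd c c') c'
            \<and> (\<forall>l\<in>carry_set d n p. cle l c \<and> cle l c' \<longrightarrow> cle l (cgcd c c')))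
       \<and> (\<exists>!m. m \<in> carry_set d n p \<and> (\<forall>c\<in>carry_set d n p. cle m c \<longrightarrow> c = m))"
proof -
  have p2: "p \<ge> 2" using assms(2) prime_ge_2_nat by blast
  define C where "C = carry_set d n p"
  have Cg: "C = {c. good d n p c}" unfolding C_def by (rule carry_set_good[OF p2])
  have lenC: "length c = topdigit p d" if "c \<in> C" for c using that Cg by (simp add: good_def)
  have cl: "\<forall>c\<in>C. \<forall>c'\<in>C. clcm c c' \<in> C \<and> cgcd c c' \<in> C"
    unfolding Cg using good_max good_min by simp
  have fin: "finite C"
  proof -
    have Ci: "C = carry_pattern p d ` {b. length b = n \<and> sum_list b = d}"
      unfolding C_def carry_set_def by blast
    moreover have "{b. length b = n \<and> sum_list b = d} \<subseteq> {b. set b \<subseteq> {..d} \<and> length b = n}"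
      using member_le_sum_list by fastforce
    moreover have "finite {b. set b \<subseteq> {..d} \<and> length b = n}"
      by (rule finite_lists_length_eq) simp
    ultimately have "finite {b. length b = n \<and> sum_list b = d}" using finite_subset by blast
    then show ?thesis using Ci by simp
  qed
  have ne: "C \<noteq> {}"
  proof -
    have "length (d # replicate (n - 1) 0) = n" "sum_list (d # replicate (n - 1) (0::nat)) = d"
      using assms(1) by simp_all
    then show ?thesis unfolding C_def carry_set_def by blast
  qed
  have lat: "\<forall>c\<in>C. \<forall>c'\<in>C.
            cle c (clcm c c') \<and> cle c' (clcm c c')
            \<and> (\<forall>u\<in>C. cle c u \<and> cle c' u \<longrightarrow> cle (clcm c c') u)
            \<and> cle (cgcd c c') c \<and> cle (cgcd c c') c'
            \<and> (\<forall>l\<in>C. cle l c \<and> cle l c' \<longrightarrow> cle l (cgcd c c'))"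
  proof (intro ballI)
    fix c c' assume c: "c \<in> C" and c': "c' \<in> C"
    have len: "length c' = length c" using lenC[OF c] lenC[OF c'] by simp
    show "cle c (clcm c c') \<and> cle c' (clcm c c')
            \<and> (\<forall>u\<in>C. cle c u \<and> cle c' u \<longrightarrow> cle (clcm c c') u)
            \<and> cle (cgcd c c') c \<and> cle (cgcd c c') c'
            \<and> (\<forall>l\<in>C. cle l c \<and> cle l c' \<longrightarrow> cle l (cgcd c c'))"
    proof (intro conjI ballI impI)
      show "cle c (clcm c c')" "cle c' (clcm c c')" "cle (cgcd c c') c" "cle (cgcd c c') c'"
        using len by (simp_all add: cle_def clcm_def cgcd_def)
    next
      fix u assume "cle c u \<and> cle c' u"
      then show "cle (clcm c c') u" using len by (simp add: cle_def clcm_def)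
    next
      fix u assume "cle u c \<and> cle u c'"
      then show "cle u (cgcd c c')" using len by (simp add: cle_def cgcd_def)
    qed
  qed
  have ex: "\<exists>m. m \<in> C \<and> (\<forall>c\<in>C. cle m c \<longrightarrow> c = m)"
  proof -
    obtain m where m: "m \<in> C" "\<forall>c\<in>C. sum_list c \<le> sum_list m"
    proof -
      have "Max (sum_list ` C) \<in> sum_list ` C" using fin ne by simp
      then obtain m where "m \<in> C" "sum_list m = Max (sum_list ` C)" by auto
      moreover have "\<forall>c\<in>C. sum_list c \<le> Max (sum_list ` C)" using fin by simp
      ultimately show ?thesis using that by auto
    qed
    have "\<forall>c\<in>C. cle m c \<longrightarrow> c = m"
    proof (intro ballI impI)
      fix c assume "c \<in> C" "cle m c"
      then have "sum_list m \<le> sum_list c" "sum_list m = sum_list c \<longrightarrow> m = c"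
        using cle_sum by blast+
      moreover have "sum_list c \<le> sum_list m" using m(2) \<open>c \<in> C\<close> by blast
      ultimately show "c = m" by simp
    qed
    then show ?thesis using m by blast
  qed
  have uniq: "m1 = m2" if "m1 \<in> C" "\<forall>c\<in>C. cle m1 c \<longrightarrow> c = m1"
                    "m2 \<in> C" "\<forall>c\<in>C. cle m2 c \<longrightarrow> c = m2" for m1 m2
  proof -
    have "clcm m1 m2 \<in> C" using cl that by blast
    moreover have "cle m1 (clcm m1 m2)" "cle m2 (clcm m1 m2)" using lat[rule_format, OF that(1) that(3)] by simp_all
    ultimately have "clcm m1 m2 = m1" "clcm m1 m2 = m2"
      using that(2)[rule_format, of "clcm m1 m2"] that(4)[rule_format, of "clcm m1 m2"] by simp_all
    then show ?thesis by simp
  qed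
  have eu: "\<exists>!m. m \<in> C \<and> (\<forall>c\<in>C. cle m c \<longrightarrow> c = m)"
    using ex uniq by (intro ex_ex1I) blast+
  show ?thesis unfolding C_def[symmetric] using cl fin ne lat eu by (intro conjI)
qed

end
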